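(* Let $0<q<1/2$, $p=1-q$, $\lambda=q/p<1$, and let $z\geq 1$ and $A\geq z$ be integers. The probability $P_A(z)$ that the $A$-Nakamoto double spend attack (described in the context) succeeds is $$P_A(z)=\frac{I_{4pq}(z,1/2)-\lambda^{A+1}}{1-\lambda^{A+1}},$$ where $I_x(a,b)=\frac{\Gamma(a+b)}{\Gamma(a)\Gamma(b)}\int_0^x t^{a-1}(1-t)^{b-1}\,dt$ is the regularized incomplete Beta function and $\Gamma$ is Euler's Gamma function.
   Context: Mining model: the attacker has relative hashrate $q$ and the honest miners relative hashrate $p=1-q$; blocks found by the honest miners and by the attacker form independent Poisson processes with rates $p/\tau_0$ and $q/\tau_0$ respectively ($\tau_0>0$ the mean interblock time); block propagation is instantaneous and difficulty is constant. The recipient of a transaction requires $z$ confirmations. The $A$-Nakamoto double spend strategy (with one pre-mined block) is: (1) the attacker mines on top of the last block of the official blockchain a block containing a transaction returning the payment funds to an address he controls; if the honest miners find a block first, he restarts mining on top of the new last official block; (2) once he has mined this one block (kept secret, with the honest miners not having found a block meanwhile), he sends the paying transaction to the vendor and keeps mining on his secret fork, while the honest miners extend the official chain; (3) the lag is (number of official blocks after the fork point) minus (number of blocks of the secret fork); if the lag reaches $A$ the attacker gives up and the attack fails; (4) if, at a moment when the official chain has added at least $z$ blocks (confirmations of the vendor transaction), the secret fork is strictly longer than the official chain (lag $\leq -1$), the attacker publishes it and the attack succeeds. The attack cycle ends at success or failure. *)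

theory Defs
  imports "HOL-Probability.Probability"
begin

text \<open>Since the honest and attacker
block discoveries are independent Poisson processes with rates p/tau0 and q/tau0,
the sequence of successive blocks (ignoring times) is i.i.d.: each block is found by
the attacker with probability q (True) and by the honest miners with probability p
(False).\<close>

text \<open>Phase (1): the attacker restarts whenever an honest block comes first, so the
pre-mining phase ends at the first attacker block.\<close>
definition premine_end :: "bool stream \<Rightarrow> nat" where
  "premine_end \<omega> = (LEAST k. \<omega> !! k)"

text \<open>Number of official (honest) blocks after the fork point, after n further blocks
have been found in phase (2) (= confirmations of the vendor transaction).\<close>
definition honest_blocks :: "bool stream \<Rightarrow> nat \<Rightarrow> nat" where
  "honest_blocks \<omega> n = card {i \<in> {1..n}. \<not> \<omega> !! (premine_end \<omega> + i)}"

text \<open>Number of blocks of the secret fork (including the pre-mined block).\<close>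
definition attacker_blocks :: "bool stream \<Rightarrow> nat \<Rightarrow> nat" where
  "attacker_blocks \<omega> n = 1 + card {i \<in> {1..n}. \<omega> !! (premine_end \<omega> + i)}"

definition lag :: "bool stream \<Rightarrow> nat \<Rightarrow> int" where
  "lag \<omega> n = int (honest_blocks \<omega> n) - int (attacker_blocks \<omega> n)"

definition attack_succeeds :: "nat \<Rightarrow> nat \<Rightarrow> bool stream \<Rightarrow> bool" where
  "attack_succeeds z A \<omega> \<longleftrightarrow> (\<exists>k. \<omega> !! k) \<and>
     (\<exists>n. honest_blocks \<omega> n \<ge> z \<and> lag \<omega> n \<le> -1 \<and> (\<forall>m\<le>n. lag \<omega> m < int A))"

definition block_space :: "real \<Rightarrow> bool stream measure" where
  "block_space q = stream_space (measure_pmf (bernoulli_pmf q))"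

definition P_A :: "real \<Rightarrow> nat \<Rightarrow> nat \<Rightarrow> real" where
  "P_A q A z = measure (block_space q) {\<omega> \<in> space (block_space q). attack_succeeds z A \<omega>}"

definition reg_inc_beta :: "real \<Rightarrow> real \<Rightarrow> real \<Rightarrow> real" where
  "reg_inc_beta x a b = Gamma (a + b) / (Gamma a * Gamma b) *
     integral {0..x} (\<lambda>t. t powr (a - 1) * (1 - t) powr (b - 1))"

end

theory Submission
  imports Defs
begin


definition cc :: "nat \<Rightarrow> nat \<Rightarrow> nat" where
  "cc k a = (if k = 0 then (if a = 0 then 1 else 0) else (k - 1 + a) choose a)"

definition Ss :: "nat \<Rightarrow> nat \<Rightarrow> real \<Rightarrow> real" where
  "Ss k n x = (\<Sum>a<n. real (cc k a) * x ^ a)"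

definition phi :: "real \<Rightarrow> nat \<Rightarrow> nat \<Rightarrow> real" where
  "phi q k n = 1 - (1-q)^k * Ss k n q + q^n * (1-q)^k * Ss k n (1-q) / (1-q)^n"

lemma cc_0[simp]: "cc k 0 = 1" by (simp add: cc_def)

lemma cc_Suc_Suc: "cc (Suc k) (Suc a) = cc k (Suc a) + cc (Suc k) a"
  by (cases k) (simp_all add: cc_def)

lemma Ss_0[simp]: "Ss k 0 x = 0" by (simp add: Ss_def)

lemma Ss_rec: "Ss (Suc k) (Suc n) x = Ss k (Suc n) x + x * Ss (Suc k) n x"
proof (induction n)
  case 0
  then show ?case by (simp add: Ss_def cc_def)
next
  case (Suc n)
  have "Ss (Suc k) (Suc (Suc n)) x = Ss (Suc k) (Suc n) x + real (cc (Suc k) (Suc n)) * x ^ Suc n"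
    by (simp add: Ss_def)
  also have "\<dots> = Ss k (Suc n) x + x * Ss (Suc k) n x + (real (cc k (Suc n)) + real (cc (Suc k) n)) * x ^ Suc n"
    by (simp add: Suc cc_Suc_Suc)
  also have "\<dots> = Ss k (Suc (Suc n)) x + x * Ss (Suc k) (Suc n) x"
    by (simp add: Ss_def algebra_simps)
  finally show ?case .
qed

lemma phi_0[simp]: "phi q k 0 = 1" by (simp add: phi_def)

lemma phi_rec: assumes "q \<noteq> 1"
  shows "phi q (Suc k) (Suc n) = (1-q) * phi q k (Suc n) + q * phi q (Suc k) n"
proof -
  have p: "1 - q \<noteq> 0" using assms by simp
  show ?thesis
    unfolding phi_def Ss_rec[of k n q] Ss_rec[of k n "1-q"]
    using p by (simp add: field_simps power_Suc)
qed

lemma Ss_zero_k: "Ss 0 (Suc n) x = 1"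
  by (induction n) (simp_all add: Ss_def cc_def)

lemma phi_k0: assumes "q \<noteq> 1" shows "phi q 0 n = (q/(1-q))^n"
proof (cases n)
  case 0 then show ?thesis by simp
next
  case (Suc m)
  then show ?thesis using assms by (simp add: phi_def Ss_zero_k power_divide)
qed



definition Hn :: "nat \<Rightarrow> bool stream \<Rightarrow> nat" where
  "Hn n \<omega> = length (filter Not (stake n \<omega>))"
definition Tn :: "nat \<Rightarrow> bool stream \<Rightarrow> nat" where
  "Tn n \<omega> = length (filter (\<lambda>x. x) (stake n \<omega>))"

definition succ :: "nat \<Rightarrow> nat \<Rightarrow> nat \<Rightarrow> int \<Rightarrow> bool stream \<Rightarrow> bool" where
  "succ z A h L \<omega> \<longleftrightarrow> (\<exists>n. z \<le> h + Hn n \<omega> \<and> L + int (Hn n \<omega>) - int (Tn n \<omega>) \<le> -1 \<and>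
     (\<forall>m\<le>n. L + int (Hn m \<omega>) - int (Tn m \<omega>) < int A))"

lemma Hn_0[simp]: "Hn 0 \<omega> = 0" and Hn_Suc[simp]: "Hn (Suc n) (x ## \<omega>) = (if x then 0 else 1) + Hn n \<omega>"
  by (auto simp: Hn_def)
lemma Tn_0[simp]: "Tn 0 \<omega> = 0" and Tn_Suc[simp]: "Tn (Suc n) (x ## \<omega>) = (if x then 1 else 0) + Tn n \<omega>"
  by (auto simp: Tn_def)

lemma meas_Hn[measurable]: "Hn n \<in> measurable (stream_space (measure_pmf M)) (count_space UNIV)"
  unfolding Hn_def
  by measurable

lemma meas_Tn[measurable]: "Tn n \<in> measurable (stream_space (measure_pmf M)) (count_space UNIV)"
  unfolding Tn_def
  by measurable

lemma meas_pred_HT: "Measurable.pred (stream_space (measure_pmf M)) (\<lambda>\<omega>. P (Hn n \<omega>) (Tn n \<omega>))"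
proof -
  have 1: "(\<lambda>\<omega>. (Hn n \<omega>, Tn n \<omega>)) \<in> measurable (stream_space (measure_pmf M)) (count_space UNIV \<Otimes>\<^sub>M count_space UNIV)"
    by measurable
  then have 1: "(\<lambda>\<omega>. (Hn n \<omega>, Tn n \<omega>)) \<in> measurable (stream_space (measure_pmf M)) (count_space UNIV)"
    by (simp add: pair_measure_countable)
  have 2: "(\<lambda>(a,b). P a b) \<in> measurable (count_space UNIV) (count_space UNIV)" by simp
  show ?thesis using measurable_compose[OF 1 2] by simp
qed

lemma meas_succ[measurable]: "Measurable.pred (stream_space (measure_pmf M)) (succ z A h L)"
proof -
  have [measurable]: "Measurable.pred (stream_space (measure_pmf M)) (\<lambda>\<omega>. z \<le> h + Hn n \<omega> \<and> L + int (Hn n \<omega>) - int (Tn n \<omega>) \<le> -1)" for n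
    by (rule meas_pred_HT[where P="\<lambda>a b. z \<le> h + a \<and> L + int a - int b \<le> -1"])
  have [measurable]: "Measurable.pred (stream_space (measure_pmf M)) (\<lambda>\<omega>. L + int (Hn m \<omega>) - int (Tn m \<omega>) < int A)" for m
    by (rule meas_pred_HT[where P="\<lambda>a b. L + int a - int b < int A"])
  have eq: "succ z A h L = (\<lambda>\<omega>. \<exists>n. (z \<le> h + Hn n \<omega> \<and> L + int (Hn n \<omega>) - int (Tn n \<omega>) \<le> -1) \<and>
     (\<forall>m\<le>n. L + int (Hn m \<omega>) - int (Tn m \<omega>) < int A))"
    by (auto simp: succ_def fun_eq_iff)
  show ?thesis unfolding eq by measurable
qed

lemma succ_Cons: "succ z A h L (x ## \<omega>) \<longleftrightarrow> (z \<le> h \<and> L \<le> -1) \<or>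
   (L < int A \<and> succ z A (if x then h else h+1) (if x then L-1 else L+1) \<omega>)"
proof
  assume "succ z A h L (x ## \<omega>)"
  then obtain n where n: "z \<le> h + Hn n (x ## \<omega>)" "L + int (Hn n (x ## \<omega>)) - int (Tn n (x ## \<omega>)) \<le> -1"
    "\<forall>m\<le>n. L + int (Hn m (x ## \<omega>)) - int (Tn m (x ## \<omega>)) < int A"
    unfolding succ_def by blast
  show "(z \<le> h \<and> L \<le> -1) \<or>
   (L < int A \<and> succ z A (if x then h else h+1) (if x then L-1 else L+1) \<omega>)"
  proof (cases n)
    case 0
    then show ?thesis using n by simp
  next
    case (Suc k)
    have "L + int (Hn 0 (x ## \<omega>)) - int (Tn 0 (x ## \<omega>)) < int A" using n(3) by blast
    then have "L < int A" by simp
    moreover have "succ z A (if x then h else h+1) (if x then L-1 else L+1) \<omega>"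
      unfolding succ_def
    proof (intro exI[of _ k] conjI allI impI)
      show "z \<le> (if x then h else h+1) + Hn k \<omega>" using n(1) Suc by (auto split: if_splits)
      show "(if x then L-1 else L+1) + int (Hn k \<omega>) - int (Tn k \<omega>) \<le> -1" using n(2) Suc by (auto split: if_splits)
      fix m assume "m \<le> k"
      then have "L + int (Hn (Suc m) (x ## \<omega>)) - int (Tn (Suc m) (x ## \<omega>)) < int A" using n(3) Suc by auto
      then show "(if x then L-1 else L+1) + int (Hn m \<omega>) - int (Tn m \<omega>) < int A" by (auto split: if_splits)
    qed
    ultimately show ?thesis by blast
  qed
next
  assume "(z \<le> h \<and> L \<le> -1) \<or>
   (L < int A \<and> succ z A (if x then h else h+1) (if x then L-1 else L+1) \<omega>)"
  then show "succ z A h L (x ## \<omega>)"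
  proof
    assume "z \<le> h \<and> L \<le> -1"
    then show ?thesis unfolding succ_def by (intro exI[of _ 0]) auto
  next
    assume a: "L < int A \<and> succ z A (if x then h else h+1) (if x then L-1 else L+1) \<omega>"
    then obtain k where k: "z \<le> (if x then h else h+1) + Hn k \<omega>" "(if x then L-1 else L+1) + int (Hn k \<omega>) - int (Tn k \<omega>) \<le> -1"
       "\<forall>m\<le>k. (if x then L-1 else L+1) + int (Hn m \<omega>) - int (Tn m \<omega>) < int A"
      unfolding succ_def by blast
    show ?thesis unfolding succ_def
    proof (intro exI[of _ "Suc k"] conjI allI impI)
      show "z \<le> h + Hn (Suc k) (x ## \<omega>)" using k(1) by (auto split: if_splits)
      show "L + int (Hn (Suc k) (x ## \<omega>)) - int (Tn (Suc k) (x ## \<omega>)) \<le> -1" using k(2) by (auto split: if_splits)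
      fix m assume m: "m \<le> Suc k"
      show "L + int (Hn m (x ## \<omega>)) - int (Tn m (x ## \<omega>)) < int A"
      proof (cases m)
        case 0 then show ?thesis using a by simp
      next
        case (Suc j)
        then have "j \<le> k" using m by simp
        then have "(if x then L-1 else L+1) + int (Hn j \<omega>) - int (Tn j \<omega>) < int A" using k(3) by blast
        then show ?thesis using Suc by (auto split: if_splits)
      qed
    qed
  qed
qed

locale att =
  fixes q :: real and z A :: nat
  assumes q0: "0 < q" and q1: "q < 1/2" and z1: "1 \<le> z" and Az: "z \<le> A"
begin

abbreviation "M \<equiv> measure_pmf (bernoulli_pmf q)"
abbreviation "S \<equiv> stream_space M"

lemma S_prob: "prob_space S"
  by (rule prob_space.prob_space_stream_space[OF prob_space_measure_pmf])

lemma space_S[simp]: "space S = UNIV"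
  by (simp add: space_stream_space)

lemma first_step:
  assumes [measurable]: "Measurable.pred S P"
  shows "measure S {\<omega>. P \<omega>} = q * measure S {\<omega>. P (True ## \<omega>)} + (1-q) * measure S {\<omega>. P (False ## \<omega>)}"
proof -
  interpret S: prob_space S by (rule S_prob)
  have "{x\<in>space S. P x} \<in> sets S" by measurable
  from prob_space.prob_stream_space[OF prob_space_measure_pmf this]
  have "ennreal (measure S {\<omega>. P \<omega>}) = (\<integral>\<^sup>+t. ennreal (measure S {\<omega>. P (t ## \<omega>)}) \<partial>M)"
    by simp
  also have "\<dots> = ennreal (measure S {\<omega>. P (True ## \<omega>)}) * ennreal q + ennreal (measure S {\<omega>. P (False ## \<omega>)}) * ennreal (1-q)"
    using q0 q1 by (subst nn_integral_bernoulli_pmf) auto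
  also have "\<dots> = ennreal (q * measure S {\<omega>. P (True ## \<omega>)} + (1-q) * measure S {\<omega>. P (False ## \<omega>)})"
    using q0 q1 by (simp add: ennreal_mult'' ennreal_plus mult.commute)
  finally show ?thesis
    using q0 q1 by (subst (asm) ennreal_inj) (auto intro!: add_nonneg_nonneg mult_nonneg_nonneg)
qed

definition u :: "nat \<Rightarrow> int \<Rightarrow> real" where
  "u h L = measure S {\<omega>. succ z A h L \<omega>}"

lemma u_rec: "u h L = (if z \<le> h \<and> L \<le> -1 then 1 else if L \<ge> int A then 0 else
   q * u h (L-1) + (1-q) * u (h+1) (L+1))"
proof -
  interpret S: prob_space S by (rule S_prob)
  have fs: "u h L = q * u h (L-1) + (1-q) * u (h+1) (L+1)" if "\<not> (z \<le> h \<and> L \<le> -1)" "L < int A"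
  proof -
    have nc: "(z \<le> h \<and> L \<le> -1) = False" using that by simp
    show ?thesis unfolding u_def using that by (subst first_step) (simp_all add: succ_Cons nc)
  qed
  show ?thesis
  proof (cases "z \<le> h \<and> L \<le> -1")
    case True
    then have "{\<omega>. succ z A h L \<omega>} = space S" unfolding succ_def by (auto intro!: exI[of _ 0])
    then show ?thesis using True unfolding u_def by (metis S.prob_space space_S)
  next
    case False
    show ?thesis
    proof (cases "L \<ge> int A")
      case True
      have "\<not> succ z A h L \<omega>" for \<omega>
      proof
        assume "succ z A h L \<omega>"
        then obtain n where "\<forall>m\<le>n. L + int (Hn m \<omega>) - int (Tn m \<omega>) < int A" unfolding succ_def by blast
        then have "L + int (Hn 0 \<omega>) - int (Tn 0 \<omega>) < int A" by blast
        then show False using True by (simp add: Hn_def Tn_def)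
      qed
      then have "{\<omega>. succ z A h L \<omega>} = {}" by blast
      then show ?thesis using True False unfolding u_def by (metis measure_empty)
    next
      case False2: False
      then show ?thesis using fs False by auto
    qed
  qed
qed


lemma Hn_mono: "m \<le> n \<Longrightarrow> Hn m \<omega> \<le> Hn n \<omega>"
proof -
  assume "m \<le> n"
  then obtain k where "n = m + k" using le_Suc_ex by blast
  then have e: "stake n \<omega> = stake m \<omega> @ stake k (sdrop m \<omega>)" using stake_add[of m \<omega> k] by simp
  show ?thesis unfolding Hn_def e by (simp del: stake_add)
qed

lemma ex_Hn_Cons: "(\<exists>n. Hn n (x ## \<omega>) = Suc k) \<longleftrightarrow> (\<exists>n. Hn n \<omega> = (if x then Suc k else k))"
proof
  assume "\<exists>n. Hn n (x ## \<omega>) = Suc k"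
  then obtain n where n: "Hn n (x ## \<omega>) = Suc k" by blast
  then obtain m where "n = Suc m" by (cases n) auto
  then show "\<exists>n. Hn n \<omega> = (if x then Suc k else k)" using n by (auto split: if_splits)
next
  assume "\<exists>n. Hn n \<omega> = (if x then Suc k else k)"
  then obtain m where "Hn m \<omega> = (if x then Suc k else k)" by blast
  then have "Hn (Suc m) (x ## \<omega>) = Suc k" by (auto split: if_splits)
  then show "\<exists>n. Hn n (x ## \<omega>) = Suc k" by blast
qed

lemma meas_exHn[measurable]: "Measurable.pred S (\<lambda>\<omega>. \<exists>n. Hn n \<omega> = k)"
proof -
  have [measurable]: "Measurable.pred S (\<lambda>\<omega>. Hn n \<omega> = k)" for n
    by (rule meas_pred_HT[where P="\<lambda>a b. a = k"])
  show ?thesis by measurable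
qed

lemma hit_one: "measure S {\<omega>. \<exists>n. Hn n \<omega> = k} = 1"
proof (induction k)
  case 0
  interpret S: prob_space S by (rule S_prob)
  have "{\<omega>. \<exists>n. Hn n \<omega> = 0} = space S" by (auto intro!: exI[of _ 0])
  then show ?case by (metis S.prob_space)
next
  case (Suc k)
  have "measure S {\<omega>. \<exists>n. Hn n \<omega> = Suc k} = q * measure S {\<omega>. \<exists>n. Hn n \<omega> = Suc k} + (1-q) * measure S {\<omega>. \<exists>n. Hn n \<omega> = k}"
    by (subst first_step) (simp_all add: ex_Hn_Cons)
  then have "(1-q) * measure S {\<omega>. \<exists>n. Hn n \<omega> = Suc k} = (1-q) * 1" using Suc by (simp add: algebra_simps)
  then show ?case using q0 q1 by simp
qed

lemma u_le1: "u h L \<le> 1"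
proof -
  interpret S: prob_space S by (rule S_prob)
  show ?thesis unfolding u_def by simp
qed

lemma u_one: assumes "h \<le> z" "L + int (z - h) \<le> -1" shows "u h L = 1"
proof -
  interpret S: prob_space S by (rule S_prob)
  have sub: "{\<omega>. \<exists>n. Hn n \<omega> = z - h} \<subseteq> {\<omega>. succ z A h L \<omega>}"
  proof safe
    fix \<omega> n assume n: "Hn n \<omega> = z - h"
    show "succ z A h L \<omega>" unfolding succ_def
    proof (intro exI[of _ n] conjI allI impI)
      show "z \<le> h + Hn n \<omega>" using n assms by simp
      show "L + int (Hn n \<omega>) - int (Tn n \<omega>) \<le> -1" using n assms by simp
      fix m assume "m \<le> n"
      then have "Hn m \<omega> \<le> z - h" using Hn_mono[of m n \<omega>] n by simp
      then show "L + int (Hn m \<omega>) - int (Tn m \<omega>) < int A" using assms by linarith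
    qed
  qed
  have "{\<omega>\<in>space S. succ z A h L \<omega>} \<in> sets S" by measurable
  then have "{\<omega>. succ z A h L \<omega>} \<in> sets S" by simp
  then have "1 \<le> u h L" unfolding u_def
    using S.finite_measure_mono[OF sub] hit_one[of "z-h"] by simp
  then show ?thesis using u_le1[of h L] by simp
qed

lemma u_ge_z: "z \<le> h \<Longrightarrow> u h L = u z L"
proof -
  assume "z \<le> h"
  then have "succ z A h L = succ z A z L" unfolding succ_def by (auto simp: fun_eq_iff)
  then show ?thesis unfolding u_def by simp
qed


lemma lam_bounds: "0 < q/(1-q)" "q/(1-q) < 1"
  using q0 q1 by (auto simp: field_simps)

definition Lam :: real where "Lam = (q/(1-q))^(A+1)"

lemma Lam_bounds: "0 < Lam" "Lam < 1"
proof -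
  have "0 < (q/(1-q))^Suc A" by (rule zero_less_power[OF lam_bounds(1)])
  moreover have "(q/(1-q))^Suc A < 1" by (rule power_Suc_less_one[OF lam_bounds])
  ultimately show "0 < Lam" "Lam < 1" unfolding Lam_def Suc_eq_plus1[symmetric] by auto
qed

lemma comb_lemma: "(d::real) \<noteq> 0 \<Longrightarrow> a = (1-q)*b + q*c \<Longrightarrow> (a - L)/d = q*((c-L)/d) + (1-q)*((b-L)/d)"
  by (simp add: field_simps)

definition Psi :: "nat \<Rightarrow> int \<Rightarrow> real" where
  "Psi k L = (phi q k (nat (L + int k + 1)) - Lam) / (1 - Lam)"

lemma Psi_one: "L + int k \<le> -1 \<Longrightarrow> Psi k L = 1"
  using Lam_bounds by (simp add: Psi_def)

lemma Psi_rec: "Psi (Suc k) L = q * Psi (Suc k) (L-1) + (1-q) * Psi k (L+1)"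
proof (cases "L + int k + 2 \<le> 0")
  case True
  then show ?thesis using Psi_one[of L "Suc k"] Psi_one[of "L-1" "Suc k"] Psi_one[of "L+1" k]
    by (simp add: algebra_simps)
next
  case False
  define n where "n = nat (L + int k + 1)"
  have e1: "nat (L + int (Suc k) + 1) = Suc n" using False by (simp add: n_def)
  have e2: "nat (L + 1 + int k + 1) = Suc n" using False by (simp add: n_def)
  have e3: "nat (L - 1 + int (Suc k) + 1) = n" by (simp add: n_def)
  have q1': "q \<noteq> 1" using q1 by simp
  have d: "1 - Lam \<noteq> 0" using Lam_bounds by simp
  show ?thesis unfolding Psi_def e1 e2 e3 phi_rec[OF q1']
    by (rule comb_lemma[OF d]) simp
qed

lemma Psi0: "Psi 0 L = ((q/(1-q)) ^ nat (L + 1) - Lam) / (1 - Lam)"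
  using q1 by (simp add: Psi_def phi_k0)

lemma Psi0_rec: assumes "0 \<le> L" shows "Psi 0 L = q * Psi 0 (L-1) + (1-q) * Psi 0 (L+1)"
proof -
  have "nat (L + 1) = Suc (nat L)" using assms by simp
  then obtain m where m: "nat (L + 1) = Suc m" by blast
  have m2: "nat (L - 1 + 1) = m" "nat (L + 1 + 1) = Suc (Suc m)" using m by auto
  define l where "l = q/(1-q)"
  have pl: "(1-q) * l = q" using q1 by (simp add: l_def)
  have pl2: "l = q + q * l" using pl by (simp add: algebra_simps)
  have key: "l ^ Suc m = q * l ^ m + (1-q) * l ^ Suc (Suc m)"
  proof -
    have "(1-q) * l ^ Suc (Suc m) = ((1-q) * l) * (l * l ^ m)" by (simp add: algebra_simps)
    also have "\<dots> = q * l * l ^ m" using pl by simp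
    finally have "(1-q) * l ^ Suc (Suc m) = q * l * l ^ m" .
    note A1 = this
    have A2: "l ^ Suc m = (q + q * l) * l ^ m" using pl2 by simp
    have "q * l^m + (1-q) * l^Suc (Suc m) = q*l^m + q*l*l^m" by (simp only: A1)
    also have "\<dots> = (q + q * l) * l ^ m" by (simp add: algebra_simps)
    finally show ?thesis using A2 by simp
  qed
  have d: "1 - Lam \<noteq> 0" using Lam_bounds by simp
  show ?thesis unfolding Psi0 m m2 l_def[symmetric]
    by (rule comb_lemma[OF d]) (use key in simp)
qed

lemma Psi0_A: "Psi 0 (int A) = 0"
  unfolding Psi0 Lam_def by (simp add: nat_add_distrib)

lemma unique_walk:
  fixes w :: "int \<Rightarrow> real"
  assumes w1: "w (-1) = 0" and wA: "w (int A) = 0"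
    and wr: "\<And>L. 0 \<le> L \<Longrightarrow> L < int A \<Longrightarrow> w L = q * w (L-1) + (1-q) * w (L+1)"
  shows "-1 \<le> L \<Longrightarrow> L \<le> int A \<Longrightarrow> w L = 0"
proof -
  define lam where "lam = q/(1-q)"
  define c where "c n = (\<Sum>i<n. lam ^ i)" for n
  have p0: "1 - q > 0" using q1 by simp
  have cr: "(1-q) * c (Suc (Suc n)) = c (Suc n) - q * c n" for n
  proof -
    have pl: "(1-q) * lam = q" using p0 by (simp add: lam_def)
    have "(1-q) * lam ^ Suc n = ((1-q) * lam) * lam ^ n" by (simp add: algebra_simps)
    then have e: "(1-q) * lam ^ Suc n = q * lam ^ n" using pl by simp
    have C1: "c (Suc (Suc n)) = c (Suc n) + lam ^ Suc n" and C2: "c (Suc n) - lam ^ n = c n" by (simp_all add: c_def)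
    have "(1-q)*c (Suc (Suc n)) = (1-q)*c (Suc n) + (1-q)*lam^Suc n" by (simp only: C1 distrib_left)
    also have "\<dots> = (1-q)*c (Suc n) + q*lam^n" by (simp only: e)
    also have "\<dots> = c (Suc n) - q*(c (Suc n) - lam^n)" by (simp add: algebra_simps)
    also have "\<dots> = c (Suc n) - q * c n" by (simp only: C2)
    finally show ?thesis .
  qed
  have ind: "n \<le> A \<Longrightarrow> w (int n - 1) = w 0 * c n \<and> w (int n) = w 0 * c (Suc n)" for n
  proof (induction n)
    case 0
    then show ?case using w1 by (simp add: c_def)
  next
    case (Suc n)
    then have IH: "w (int n - 1) = w 0 * c n" "w (int n) = w 0 * c (Suc n)" by auto
    have "w (int n) = q * w (int n - 1) + (1-q) * w (int n + 1)" using Suc.prems by (intro wr) auto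
    then have "(1-q) * w (int n + 1) = w 0 * ((1-q) * c (Suc (Suc n)))" unfolding cr IH by (simp add: algebra_simps)
    then have "w (int n + 1) = w 0 * c (Suc (Suc n))" using p0 by simp
    then show ?case using IH by (simp add: add.commute)
  qed
  have "c (Suc A) \<ge> 1" unfolding c_def
  proof -
    have "(\<Sum>i<Suc A. lam ^ i) = 1 + (\<Sum>i<A. lam ^ Suc i)" by (simp only: sum.lessThan_Suc_shift power_0)
    moreover have "(\<Sum>i<A. lam ^ Suc i) \<ge> 0" using lam_bounds unfolding lam_def by (intro sum_nonneg zero_le_power less_imp_le)
    ultimately show "(\<Sum>i<Suc A. lam ^ i) \<ge> 1" by simp
  qed
  then have w0: "w 0 = 0" using ind[of A] wA by simp
  assume L: "-1 \<le> L" "L \<le> int A"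
  define n where "n = nat (L + 1)"
  have n: "L = int n - 1" "n \<le> Suc A" using L by (auto simp: n_def)
  show "w L = 0"
  proof (cases n)
    case 0 then show ?thesis using n w1 by simp
  next
    case (Suc m)
    then have "m \<le> A" using n by simp
    then show ?thesis using ind[of m] n Suc w0 by simp
  qed
qed

lemma phase2: "-1 \<le> L \<Longrightarrow> L \<le> int A \<Longrightarrow> u z L = Psi 0 L"
proof -
  assume L: "-1 \<le> L" "L \<le> int A"
  have "(\<lambda>L. u z L - Psi 0 L) L = 0"
  proof (rule unique_walk[OF _ _ _ L])
    show "u z (-1) - Psi 0 (-1) = 0" using u_rec[of z "-1"] Psi_one[of "-1" 0] by simp
    show "u z (int A) - Psi 0 (int A) = 0" using u_rec[of z "int A"] Psi0_A Az z1 by simp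
    fix L :: int assume "0 \<le> L" "L < int A"
    then have "u z L = q * u z (L-1) + (1-q) * u z (L+1)" using u_rec[of z L] u_ge_z[of "z+1"] by simp
    then show "u z L - Psi 0 L = q * (u z (L - 1) - Psi 0 (L - 1)) + (1 - q) * (u z (L + 1) - Psi 0 (L + 1))"
      using Psi0_rec[OF \<open>0 \<le> L\<close>] by (simp add: algebra_simps)
  qed
  then show ?thesis by simp
qed

lemma phase1: "k \<le> z \<Longrightarrow> L + int k \<le> int A \<Longrightarrow> u (z - k) L = Psi k L"
proof (induction k arbitrary: L)
  case 0
  show ?case
  proof (cases "L \<le> -1")
    case True
    then show ?thesis using u_rec[of z L] Psi_one[of L 0] by simp
  next
    case False
    then show ?thesis using phase2[of L] 0 by simp
  qed
next
  case (Suc k)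
  note oIH = Suc.IH
  note oprems = Suc.prems
  define h where "h = z - Suc k"
  have hz: "h < z" "Suc h = z - k" using Suc.prems by (auto simp: h_def)
  have "\<forall>L. L = int n - int k - 2 \<longrightarrow> L + int (Suc k) \<le> int A \<longrightarrow> u h L = Psi (Suc k) L" for n
  proof (induction n)
    case 0
    show ?case
    proof (intro allI impI)
      fix L :: int assume L: "L = int 0 - int k - 2"
      have "u h L = 1" using Suc.prems L by (intro u_one) (auto simp: h_def)
      moreover have "Psi (Suc k) L = 1" using L by (intro Psi_one) simp
      ultimately show "u h L = Psi (Suc k) L" by simp
    qed
  next
    case (Suc n)
    show ?case
    proof (intro allI impI)
      fix L :: int assume L: "L = int (Suc n) - int k - 2" "L + int (Suc k) \<le> int A"
      have "u h L = q * u h (L-1) + (1-q) * u (h+1) (L+1)"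
        using u_rec[of h L] hz L by auto
      also have "u h (L-1) = Psi (Suc k) (L-1)" using Suc.IH L by auto
      also have "u (h+1) (L+1) = Psi k (L+1)"
      proof -
        have "u (z-k) (L+1) = Psi k (L+1)" using oprems L by (intro oIH) auto
        then show ?thesis using hz by simp
      qed
      finally show "u h L = Psi (Suc k) L" using Psi_rec[of k L] by simp
    qed
  qed
  note inner = this
  show ?case
  proof (cases "L + int k + 2 \<ge> 0")
    case True
    have "L = int (nat (L + int k + 2)) - int k - 2" using True by simp
    then show ?thesis using inner oprems unfolding h_def by blast
  next
    case False
    have "u (z - Suc k) L = 1" using False oprems by (intro u_one) auto
    moreover have "Psi (Suc k) L = 1" using False by (intro Psi_one) simp
    ultimately show ?thesis by simp
  qed
qed


definition Xev :: "bool stream \<Rightarrow> bool" where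
  "Xev \<omega> \<longleftrightarrow> (\<exists>k. (\<forall>j<k. \<not> \<omega> !! j) \<and> \<omega> !! k \<and> succ z A 0 (-1) (sdrop (Suc k) \<omega>))"

lemma Xev_True: "Xev (True ## \<omega>) \<longleftrightarrow> succ z A 0 (-1) \<omega>"
proof
  assume "Xev (True ## \<omega>)"
  then obtain k where k: "\<forall>j<k. \<not> (True ## \<omega>) !! j" "succ z A 0 (-1) (sdrop (Suc k) (True ## \<omega>))"
    unfolding Xev_def by blast
  have "\<not> (0 < k)" using spec[OF k(1), of 0] by simp
  then have "k = 0" by simp
  then show "succ z A 0 (-1) \<omega>" using k by simp
next
  assume "succ z A 0 (-1) \<omega>"
  then show "Xev (True ## \<omega>)" unfolding Xev_def by (intro exI[of _ 0]) simp
qed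

lemma Xev_False: "Xev (False ## \<omega>) \<longleftrightarrow> Xev \<omega>"
proof
  assume "Xev (False ## \<omega>)"
  then obtain k where k: "\<forall>j<k. \<not> (False ## \<omega>) !! j" "(False ## \<omega>) !! k" "succ z A 0 (-1) (sdrop (Suc k) (False ## \<omega>))"
    unfolding Xev_def by blast
  then obtain k' where k': "k = Suc k'" by (cases k) auto
  show "Xev \<omega>" unfolding Xev_def
  proof (intro exI[of _ k'] conjI allI impI)
    fix j assume "j < k'" then show "\<not> \<omega> !! j" using spec[OF k(1), of "Suc j"] k' by simp
  next
    show "\<omega> !! k'" using k(2) k' by simp
    show "succ z A 0 (-1) (sdrop (Suc k') \<omega>)" using k(3) k' by simp
  qed
next
  assume "Xev \<omega>"
  then obtain k where k: "\<forall>j<k. \<not> \<omega> !! j" "\<omega> !! k" "succ z A 0 (-1) (sdrop (Suc k) \<omega>)"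
    unfolding Xev_def by blast
  show "Xev (False ## \<omega>)" unfolding Xev_def
  proof (intro exI[of _ "Suc k"] conjI allI impI)
    fix j assume "j < Suc k" then show "\<not> (False ## \<omega>) !! j" using k(1) by (cases j) auto
  next
    show "(False ## \<omega>) !! Suc k" using k(2) by simp
    show "succ z A 0 (-1) (sdrop (Suc (Suc k)) (False ## \<omega>))" using k(3) by simp
  qed
qed

lemma card_filter_stake: "card {i\<in>{1..n}. P ((x ## s) !! i)} = length (filter P (stake n s))"
proof -
  have e: "{i\<in>{1..n}. P ((x ## s) !! i)} = Suc ` {i. i < n \<and> P (s !! i)}"
  proof (rule set_eqI, rule iffI)
    fix i assume i: "i \<in> {i\<in>{1..n}. P ((x ## s) !! i)}"
    then obtain j where j: "i = Suc j" by (cases i) auto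
    then have "j \<in> {i. i < n \<and> P (s !! i)}" using i by simp
    then show "i \<in> Suc ` {i. i < n \<and> P (s !! i)}" using j by blast
  next
    fix i assume "i \<in> Suc ` {i. i < n \<and> P (s !! i)}"
    then obtain j where "i = Suc j" "j < n" "P (s !! j)" by blast
    then show "i \<in> {i\<in>{1..n}. P ((x ## s) !! i)}" by simp
  qed
  have "card {i\<in>{1..n}. P ((x ## s) !! i)} = card {i. i < n \<and> P (s !! i)}"
    unfolding e by (rule card_image) simp
  also have "\<dots> = length (filter P (stake n s))"
    unfolding length_filter_conv_card by (intro arg_cong[where f=card]) auto
  finally show ?thesis .
qed
lemma premine_True: "premine_end (True ## \<omega>) = 0"
  unfolding premine_end_def by simp

lemma premine_False: "\<exists>k. \<omega> !! k \<Longrightarrow> premine_end (False ## \<omega>) = Suc (premine_end \<omega>)"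
proof -
  assume "\<exists>k. \<omega> !! k"
  then obtain k where k: "\<omega> !! k" by blast
  have "(LEAST k. (False ## \<omega>) !! k) = Suc (LEAST m. (False ## \<omega>) !! Suc m)"
    by (rule Least_Suc[of _ "Suc k"]) (use k in simp_all)
  then show ?thesis unfolding premine_end_def by simp
qed

lemma attack_True: "attack_succeeds z A (True ## \<omega>) \<longleftrightarrow> succ z A 0 (-1) \<omega>"
proof -
  have hb: "honest_blocks (True ## \<omega>) n = Hn n \<omega>" for n
    unfolding honest_blocks_def premine_True Hn_def using card_filter_stake[of n Not True \<omega>] by simp
  have ab: "attacker_blocks (True ## \<omega>) n = 1 + Tn n \<omega>" for n
    unfolding attacker_blocks_def premine_True Tn_def using card_filter_stake[of n "\<lambda>x. x" True \<omega>] by simp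
  have "\<exists>k. (True ## \<omega>) !! k" by (intro exI[of _ 0]) simp
  then show ?thesis unfolding attack_succeeds_def succ_def lag_def hb ab
    by (simp add: algebra_simps)
qed

lemma attack_False: "attack_succeeds z A (False ## \<omega>) \<longleftrightarrow> attack_succeeds z A \<omega>"
proof (cases "\<exists>k. \<omega> !! k")
  case True
  have hb: "honest_blocks (False ## \<omega>) n = honest_blocks \<omega> n" for n
    unfolding honest_blocks_def premine_False[OF True] by simp
  have ab: "attacker_blocks (False ## \<omega>) n = attacker_blocks \<omega> n" for n
    unfolding attacker_blocks_def premine_False[OF True] by simp
  from True obtain k where "\<omega> !! k" by blast
  then have "(False ## \<omega>) !! Suc k" by simp
  then have "\<exists>k. (False ## \<omega>) !! k" by blast
  then show ?thesis unfolding attack_succeeds_def lag_def hb ab using True by simp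
next
  case False
  have "\<not> (False ## \<omega>) !! k" for k using False by (cases k) auto
  then have "\<not> (\<exists>k. (False ## \<omega>) !! k)" by blast
  then show ?thesis using False unfolding attack_succeeds_def by blast
qed

lemma attack_Xev: "attack_succeeds z A \<omega> \<longleftrightarrow> Xev \<omega>"
proof (cases "\<exists>k. \<omega> !! k")
  case True
  then obtain k where "\<omega> !! k" by blast
  then show ?thesis
  proof (induction k arbitrary: \<omega>)
    case 0
    then obtain s where "\<omega> = True ## s" by (cases \<omega>) auto
    then show ?case using attack_True Xev_True by simp
  next
    case (Suc k)
    obtain x s where xs: "\<omega> = x ## s" by (cases \<omega>) auto
    show ?case
    proof (cases x)
      case True then show ?thesis using xs attack_True Xev_True by simp
    next
      case False
      then have "s !! k" using Suc.prems xs by simp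
      then show ?thesis using Suc.IH xs False attack_False Xev_False by simp
    qed
  qed
next
  case False
  then show ?thesis unfolding attack_succeeds_def Xev_def by blast
qed

lemma meas_Xev[measurable]: "Measurable.pred S Xev"
proof -
  have [measurable]: "Measurable.pred S (\<lambda>\<omega>. succ z A 0 (-1) (sdrop (Suc k) \<omega>))" for k
    by (rule measurable_compose[OF measurable_sdrop meas_succ])
  show ?thesis unfolding Xev_def by measurable
qed

lemma P_A_u: "P_A q A z = u 0 (-1)"
proof -
  have "P_A q A z = measure S {\<omega>. Xev \<omega>}"
    unfolding P_A_def block_space_def using attack_Xev by simp
  moreover have "measure S {\<omega>. Xev \<omega>} = q * u 0 (-1) + (1-q) * measure S {\<omega>. Xev \<omega>}"
    unfolding u_def by (subst first_step) (simp_all add: Xev_True Xev_False)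
  ultimately show ?thesis using q0 by (simp add: algebra_simps)
qed

lemma P_A_phi: "P_A q A z = (phi q z z - Lam) / (1 - Lam)"
proof -
  have "u 0 (-1) = Psi z (-1)" using phase1[of z "-1"] Az by simp
  then show ?thesis unfolding P_A_u Psi_def by simp
qed

end



lemma cc_Suc: "cc (Suc w) a = (w + a) choose a"
  by (simp add: cc_def)

lemma cc_absorb: "Suc m * cc (Suc w) (Suc m) = Suc w * cc (Suc (Suc w)) m"
proof -
  have "Suc m * cc (Suc w) (Suc m) = Suc m * (Suc (w + m) choose Suc m)" by (simp add: cc_Suc)
  also have "\<dots> = Suc (w + m) * ((w + m) choose m)" by (rule Suc_times_binomial)
  also have "((w + m) choose m) = ((w + m) choose w)" by (metis add_diff_cancel_left' binomial_symmetric le_add2 add.commute)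
  also have "Suc (w + m) * ((w + m) choose w) = Suc w * (Suc (w + m) choose Suc w)" by (rule Suc_times_binomial[symmetric])
  also have "(Suc (w + m) choose Suc w) = (Suc (w + m) choose m)" by (metis add_Suc add_diff_cancel_left' binomial_symmetric le_add1 add.commute)
  also have "\<dots> = cc (Suc (Suc w)) m" by (simp add: cc_Suc)
  finally show ?thesis .
qed

definition RR :: "nat \<Rightarrow> nat \<Rightarrow> real \<Rightarrow> real" where
  "RR z n x = (1-x)^z * Ss z n x"

lemma RR_deriv:
  "((RR (Suc w) (Suc m)) has_real_derivative
     (- real (Suc w) * real (cc (Suc (Suc w)) m) * (1-x)^w * x^m)) (at x)"
proof (induction m)
  case 0
  have e: "RR (Suc w) (Suc 0) = (\<lambda>x. (1-x)^Suc w)" by (simp add: RR_def Ss_def fun_eq_iff)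
  have "((\<lambda>x. (1-x)^Suc w) has_real_derivative ((1 + real w) * ((0 - 1) * (1-x)^w))) (at x)"
    by (intro DERIV_power_Suc DERIV_diff DERIV_const DERIV_ident)
  then show ?case unfolding e by (simp add: cc_def algebra_simps)
next
  case (Suc m)
  have e: "RR (Suc w) (Suc (Suc m)) = (\<lambda>x. RR (Suc w) (Suc m) x + real (cc (Suc w) (Suc m)) * ((1-x)^Suc w * x^Suc m))"
    by (simp add: RR_def Ss_def fun_eq_iff algebra_simps)
  have d2: "((\<lambda>x. (1-x)^Suc w * x^Suc m) has_real_derivative
      (- real (Suc w) * (1-x)^w * x^Suc m + (1-x)^Suc w * (real (Suc m) * x^m))) (at x)"
  proof -
    have a: "((\<lambda>x. (1-x)^Suc w) has_real_derivative ((1 + real w) * ((0 - 1) * (1-x)^w))) (at x)"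
      by (intro DERIV_power_Suc DERIV_diff DERIV_const DERIV_ident)
    have b: "((\<lambda>x. x^Suc m) has_real_derivative ((1 + real m) * (1 * x^m))) (at x)"
      by (intro DERIV_power_Suc DERIV_ident)
    have E: "((1 + real w) * ((0 - 1) * (1-x)^w)) * x^Suc m + ((1 + real m) * (1 * x^m)) * (1-x)^Suc w
       = - real (Suc w) * (1-x)^w * x^Suc m + (1-x)^Suc w * (real (Suc m) * x^m)"
      by (simp add: algebra_simps)
    show ?thesis using DERIV_mult[OF a b] unfolding E .
  qed
  have "((\<lambda>x. RR (Suc w) (Suc m) x + real (cc (Suc w) (Suc m)) * ((1-x)^Suc w * x^Suc m)) has_real_derivative
     (- real (Suc w) * real (cc (Suc (Suc w)) m) * (1-x)^w * x^m +
      real (cc (Suc w) (Suc m)) * (- real (Suc w) * (1-x)^w * x^Suc m + (1-x)^Suc w * (real (Suc m) * x^m)))) (at x)"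
    by (intro DERIV_add DERIV_cmult Suc d2)
  moreover have "- real (Suc w) * real (cc (Suc (Suc w)) m) * (1-x)^w * x^m +
      real (cc (Suc w) (Suc m)) * (- real (Suc w) * (1-x)^w * x^Suc m + (1-x)^Suc w * (real (Suc m) * x^m))
     = - real (Suc w) * real (cc (Suc (Suc w)) (Suc m)) * (1-x)^w * x^Suc m"
  proof -
    have ab: "real (Suc m) * real (cc (Suc w) (Suc m)) = real (Suc w) * real (cc (Suc (Suc w)) m)"
      using cc_absorb[of m w] by (metis of_nat_mult)
    have pa: "real (cc (Suc (Suc w)) (Suc m)) = real (cc (Suc w) (Suc m)) + real (cc (Suc (Suc w)) m)"
      using cc_Suc_Suc[of "Suc w" m] by simp
    have "real (cc (Suc w) (Suc m)) * ((1-x)^Suc w * (real (Suc m) * x^m))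
        = (real (Suc m) * real (cc (Suc w) (Suc m))) * (1-x) * (1-x)^w * x^m" by (simp add: algebra_simps)
    also have "\<dots> = real (Suc w) * real (cc (Suc (Suc w)) m) * (1-x) * (1-x)^w * x^m" by (simp only: ab)
    finally have t: "real (cc (Suc w) (Suc m)) * ((1-x)^Suc w * (real (Suc m) * x^m))
        = real (Suc w) * real (cc (Suc (Suc w)) m) * (1-x) * (1-x)^w * x^m" .
    show ?thesis unfolding pa distrib_right distrib_left t by (simp add: algebra_simps)
  qed
  ultimately show ?case unfolding e by simp
qed


definition GG :: "nat \<Rightarrow> real \<Rightarrow> real" where
  "GG w x = 1 - RR (Suc w) (Suc w) x + RR (Suc w) (Suc w) (1-x)"

definition C0 :: "nat \<Rightarrow> real" where
  "C0 w = 2 * real (Suc w) * real (cc (Suc (Suc w)) w)"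

lemma GG_deriv: "(GG w has_real_derivative (C0 w * (x*(1-x))^w)) (at x)"
proof -
  have dm: "((\<lambda>x. 1 - x) has_real_derivative (0 - 1)) (at x)" by (intro DERIV_diff DERIV_const DERIV_ident)
  have d2: "((\<lambda>x. RR (Suc w) (Suc w) (1-x)) has_real_derivative
     ((- real (Suc w) * real (cc (Suc (Suc w)) w) * (1-(1-x))^w * (1-x)^w) * (0 - 1))) (at x)"
    by (rule DERIV_chain2[OF RR_deriv dm])
  have "((\<lambda>x. 1 - RR (Suc w) (Suc w) x + RR (Suc w) (Suc w) (1-x)) has_real_derivative
     (0 - (- real (Suc w) * real (cc (Suc (Suc w)) w) * (1-x)^w * x^w) +
      (- real (Suc w) * real (cc (Suc (Suc w)) w) * (1-(1-x))^w * (1-x)^w) * (0 - 1))) (at x)"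
    by (intro DERIV_add DERIV_diff DERIV_const RR_deriv d2)
  then show ?thesis unfolding GG_def[abs_def]
    by (rule DERIV_cong) (unfold power_mult_distrib, simp add: C0_def algebra_simps)
qed

definition QQ :: "real \<Rightarrow> real" where
  "QQ y = (1 - sqrt (1 - y)) / 2"

lemma QQ_deriv: "y < 1 \<Longrightarrow> (QQ has_real_derivative (1 / (4 * sqrt (1 - y)))) (at y)"
proof -
  assume y: "y < 1"
  have dm: "((\<lambda>x. 1 - x) has_real_derivative (0 - 1)) (at y)" by (intro DERIV_diff DERIV_const DERIV_ident)
  have ds: "((\<lambda>x. sqrt (1 - x)) has_real_derivative (inverse (sqrt (1 - y)) / 2 * (0 - 1))) (at y)"
    by (rule DERIV_chain2[OF DERIV_real_sqrt dm]) (use y in simp)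
  have "((\<lambda>x. (1 - sqrt (1 - x)) / 2) has_real_derivative ((0 - inverse (sqrt (1 - y)) / 2 * (0 - 1)) / 2)) (at y)"
    by (intro DERIV_cdivide DERIV_diff DERIV_const ds)
  then show ?thesis unfolding QQ_def[abs_def]
    by (rule DERIV_cong) (simp add: field_simps)
qed

lemma QQ_prod: "y \<le> 1 \<Longrightarrow> QQ y * (1 - QQ y) = y / 4"
proof -
  assume "y \<le> 1"
  then have s: "sqrt (1 - y) ^ 2 = 1 - y" by simp
  have "QQ y * (1 - QQ y) = (1 - sqrt (1 - y) ^ 2) / 4" unfolding QQ_def by (simp add: field_simps power2_eq_square)
  then show ?thesis using s by simp
qed

lemma C0_pos: "C0 w > 0"
  unfolding C0_def by (simp add: cc_Suc)

definition FF :: "nat \<Rightarrow> real \<Rightarrow> real" where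
  "FF w y = 4 ^ Suc w / C0 w * GG w (QQ y)"

lemma FF_deriv: assumes "0 < y" "y < 1"
  shows "(FF w has_real_derivative (y powr (real (Suc w) - 1) * (1 - y) powr (1/2 - 1))) (at y)"
proof -
  have d: "(FF w has_real_derivative (4 ^ Suc w / C0 w * ((C0 w * (QQ y * (1 - QQ y))^w) * (1 / (4 * sqrt (1 - y)))))) (at y)"
    unfolding FF_def[abs_def] by (intro DERIV_cmult DERIV_chain2[OF GG_deriv QQ_deriv] assms)
  have e1: "y powr (real (Suc w) - 1) = y ^ w" using assms by (simp add: powr_realpow)
  have e2: "(1 - y) powr (1/2 - 1) = 1 / sqrt (1 - y)"
  proof -
    have "(1 - y) powr (1/2 - 1) = (1 - y) powr (- (1/2))" by simp
    also have "\<dots> = inverse ((1 - y) powr (1/2))" by (rule powr_minus)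
    also have "\<dots> = 1 / sqrt (1 - y)" using assms by (simp add: powr_half_sqrt inverse_eq_divide)
    finally show ?thesis .
  qed
  have c: "C0 w \<noteq> 0" using C0_pos[of w] by simp
  have "4 ^ Suc w / C0 w * ((C0 w * (QQ y * (1 - QQ y))^w) * (1 / (4 * sqrt (1 - y))))
      = y ^ w * (1 / sqrt (1 - y))"
  proof -
    have p: "(QQ y * (1 - QQ y))^w = y^w / 4^w" unfolding QQ_prod[OF less_imp_le[OF assms(2)]] by (rule power_divide)
    have g: "(4::real)^Suc w / c1 * ((c1 * (a1 / 4^w)) * (1 / (4 * s1))) = a1 * (1 / s1)" if "c1 \<noteq> 0" for c1 a1 s1 :: real
      using that by (simp add: field_simps)
    show ?thesis unfolding p by (rule g[OF c])
  qed
  then show ?thesis using d unfolding e1 e2 by simp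
qed

lemma FF_cont: "continuous_on {0..x0} (FF w)"
  unfolding FF_def[abs_def] GG_def RR_def Ss_def QQ_def
  by (intro continuous_intros) auto

lemma FF_integral: assumes "0 \<le> x0" "x0 < 1"
  shows "integral {0..x0} (\<lambda>t. t powr (real (Suc w) - 1) * (1 - t) powr (1/2 - 1)) = FF w x0 - FF w 0"
proof -
  have "((\<lambda>t. t powr (real (Suc w) - 1) * (1 - t) powr (1/2 - 1)) has_integral (FF w x0 - FF w 0)) {0..x0}"
  proof (rule fundamental_theorem_of_calculus_interior[OF assms(1) FF_cont])
    fix x assume "x \<in> {0<..<x0}"
    then have "0 < x" "x < 1" using assms by auto
    then show "(FF w has_vector_derivative x powr (real (Suc w) - 1) * (1 - x) powr (1/2 - 1)) (at x)"
      using FF_deriv has_real_derivative_iff_has_vector_derivative by blast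
  qed
  then show ?thesis by (rule integral_unique)
qed


lemma Ss_at0: "Ss (Suc w) (Suc n) 0 = 1"
  unfolding Ss_def by (simp only: sum.lessThan_Suc_shift) simp

lemma GG_0: "GG w 0 = 0"
  unfolding GG_def RR_def using Ss_at0[of w w] by simp

lemma FF_0: "FF w 0 = 0"
  unfolding FF_def QQ_def using GG_0 by simp

lemma QQ_q: assumes "0 < q" "q < 1/2" shows "QQ (4 * (1 - q) * q) = q"
proof -
  have "1 - 4 * (1 - q) * q = (1 - 2*q)^2" by (simp add: power2_eq_square algebra_simps)
  then have "sqrt (1 - 4 * (1 - q) * q) = 1 - 2*q" using assms by simp
  then show ?thesis unfolding QQ_def by simp
qed

lemma phi_GG: assumes "q \<noteq> 1" shows "phi q (Suc w) (Suc w) = GG w q"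
  unfolding phi_def GG_def RR_def using assms by simp

lemma binom_absorb2: "(n - k) * (n choose k) = (Suc k) * (n choose Suc k)"
  by (metis binomial_absorption binomial_absorb_comp)

lemma binom_nat: "(w+2) * ((2*w+3) choose (w+1)) = 2*(2*w+3) * ((2*w+1) choose w)"
proof -
  define X where "X = ((2*w+3) choose (w+1))"
  define Y where "Y = ((2*w+2) choose w)"
  define Z where "Z = ((2*w+2) choose Suc w)"
  define W where "W = ((2*w+1) choose w)"
  have A0: "Suc w * (Suc (2*w+2) choose Suc w) = Suc (2*w+2) * ((2*w+2) choose w)" by (rule Suc_times_binomial)
  have B0: "Suc w * (Suc (2*w+1) choose Suc w) = Suc (2*w+1) * ((2*w+1) choose w)" by (rule Suc_times_binomial)
  have C0: "((2*w+2) - w) * ((2*w+2) choose w) = Suc w * ((2*w+2) choose Suc w)" by (rule binom_absorb2)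
  have xe: "(Suc (2*w+2) choose Suc w) = X" unfolding X_def by (rule arg_cong2[where f=binomial]) simp_all
  have ze: "(Suc (2*w+1) choose Suc w) = Z" unfolding Z_def by (rule arg_cong2[where f=binomial]) simp_all
  have A: "(w+1) * X = (2*w+3) * Y" using A0 unfolding xe Y_def[symmetric] by (simp add: algebra_simps)
  have B: "(w+1) * Z = (2*w+2) * W" using B0 unfolding ze W_def[symmetric] by simp
  have C: "(w+2) * Y = (w+1) * Z" using C0 unfolding Y_def[symmetric] Z_def[symmetric] by simp
  have nz: "w + 1 \<noteq> (0::nat)" by simp
  have Zeq: "(w+1) * Z = (w+1) * (2*W)" using B by (simp add: algebra_simps)
  have Z2: "Z = 2*W" using Zeq mult_left_cancel[OF nz] by blast
  have "(w+1) * ((w+2) * X) = (w+2) * ((w+1) * X)" by (simp only: mult_ac)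
  also have "\<dots> = (w+2) * ((2*w+3) * Y)" by (simp only: A)
  also have "\<dots> = (2*w+3) * ((w+2) * Y)" by (simp only: mult_ac)
  also have "\<dots> = (2*w+3) * ((w+1) * Z)" by (simp only: C)
  also have "\<dots> = (w+1) * ((2*w+3) * Z)" by (simp only: mult_ac)
  finally have "(w+2) * X = (2*w+3) * Z" using mult_left_cancel[OF nz] by blast
  then show ?thesis unfolding X_def[symmetric] W_def[symmetric] Z2 by simp
qed

lemma binom_ratio: "real (Suc (Suc w)) * real ((Suc (Suc w) + Suc w) choose Suc w)
   = 2 * real (2 * w + 3) * real ((Suc w + w) choose w)"
proof -
  define X where "X = ((2*w+3) choose (w+1))"
  define W where "W = ((2*w+1) choose w)"
  have e: "((Suc (Suc w) + Suc w) choose Suc w) = X" unfolding X_def by (rule arg_cong2[where f=binomial]) simp_all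
  have e2: "((Suc w + w) choose w) = W" unfolding W_def by (rule arg_cong2[where f=binomial]) simp_all
  have R0: "(w+2) * X = 2*(2*w+3) * W" unfolding X_def W_def by (rule binom_nat)
  have R: "real (w+2) * real X = 2 * real (2*w+3) * real W"
    using arg_cong[OF R0, of real] by (simp only: of_nat_mult of_nat_numeral)
  show ?thesis unfolding e e2 using R by simp
qed

lemma Gamma_ratio: "Gamma (real (Suc w) + 1/2) / (Gamma (real (Suc w)) * Gamma (1/2)) = C0 w / 4 ^ Suc w"
proof (induction w)
  case 0
  have "Gamma (1/2 + 1 :: real) = 1/2 * Gamma (1/2)"
    by (rule Gamma_plus1) (auto dest: nonpos_Ints_nonpos)
  moreover have ne: "Gamma (1/2 :: real) \<noteq> 0" by (simp add: Gamma_one_half_real)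
  ultimately show ?case by (simp add: C0_def cc_Suc add.commute ne)
next
  case (Suc w)
  have g1: "Gamma (real (Suc w) + 1/2 + 1) = (real (Suc w) + 1/2) * Gamma (real (Suc w) + 1/2)"
    by (rule Gamma_plus1) (auto dest: nonpos_Ints_nonpos)
  have g2: "Gamma (real (Suc w) + 1) = real (Suc w) * Gamma (real (Suc w))"
    by (rule Gamma_plus1) (auto dest: nonpos_Ints_nonpos)
  have e1: "real (Suc (Suc w)) + 1/2 = real (Suc w) + 1/2 + 1" by simp
  have e2: "real (Suc (Suc w)) = real (Suc w) + 1" by simp
  have pos: "Gamma (real (Suc w)) > 0" "Gamma (1/2::real) > 0" by simp_all
  have "Gamma (real (Suc (Suc w)) + 1/2) / (Gamma (real (Suc (Suc w))) * Gamma (1/2))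
     = (Gamma (real (Suc w) + 1/2) / (Gamma (real (Suc w)) * Gamma (1/2))) * ((real (Suc w) + 1/2) / real (Suc w))"
    unfolding e1 g1 unfolding e2 g2 using pos by (simp add: field_simps)
  also have "\<dots> = C0 w / 4 ^ Suc w * ((real (Suc w) + 1/2) / real (Suc w))" using Suc by simp
  also have "\<dots> = C0 (Suc w) / 4 ^ Suc (Suc w)"
  proof -
    have br: "real (Suc (Suc w)) * real (cc (Suc (Suc (Suc w))) (Suc w)) = 2 * real (2 * w + 3) * real (cc (Suc (Suc w)) w)"
      unfolding cc_Suc using binom_ratio[of w] by simp
    have "C0 (Suc w) * real (Suc w) = 2 * real (Suc w) * (real (Suc (Suc w)) * real (cc (Suc (Suc (Suc w))) (Suc w)))"
      unfolding C0_def by (simp only: mult_ac)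
    also have "\<dots> = 2 * real (Suc w) * (2 * real (2 * w + 3) * real (cc (Suc (Suc w)) w))"
      by (simp only: br)
    also have "\<dots> = C0 w * (4 * (real (Suc w) + 1/2))"
      unfolding C0_def by (simp add: algebra_simps)
    finally have "C0 (Suc w) * real (Suc w) = C0 w * (4 * (real (Suc w) + 1/2))" .
    then have X: "C0 (Suc w) = C0 w * (4 * (real (Suc w) + 1/2)) / real (Suc w)"
      by (simp add: field_simps del: of_nat_Suc)
    have gg: "a / (4 * P) * ((r + 1/2) / r) = a * (4 * (r + 1/2)) / r / (4 * (4 * P))"
      if "r \<noteq> 0" "P \<noteq> 0" for a r P :: real
      using that by (simp add: field_simps)
    show ?thesis unfolding X power_Suc by (rule gg) simp_all
  qed
  finally show ?case .
qed



lemma reg_beta_GG: assumes "0 < q" "q < 1/2"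
  shows "reg_inc_beta (4 * (1 - q) * q) (real (Suc w)) (1/2) = GG w q"
proof -
  define x0 where "x0 = 4 * (1 - q) * q"
  have x0: "0 \<le> x0" "x0 < 1"
  proof -
    show "0 \<le> x0" unfolding x0_def using assms by simp
    have e: "1 - x0 = (1 - 2*q)^2" unfolding x0_def by (simp add: power2_eq_square algebra_simps)
    have pos: "(1 - 2*q)^2 > 0" using assms by simp
    show "x0 < 1" using e pos by linarith
  qed
  have c: "C0 w \<noteq> 0" using C0_pos[of w] by simp
  have "reg_inc_beta x0 (real (Suc w)) (1/2) = C0 w / 4 ^ Suc w * (FF w x0 - FF w 0)"
    unfolding reg_inc_beta_def FF_integral[OF x0] Gamma_ratio by simp
  also have "\<dots> = GG w (QQ x0)" by (simp only: FF_0, simp add: FF_def c)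
  also have "QQ x0 = q" unfolding x0_def by (rule QQ_q[OF assms])
  finally show ?thesis unfolding x0_def .
qed

theorem theorem1:
  fixes q :: real and z A :: nat
  assumes "0 < q" and "q < 1/2" and "z \<ge> 1" and "A \<ge> z"
  shows "P_A q A z =
    (reg_inc_beta (4 * (1 - q) * q) (real z) (1/2) - (q / (1 - q)) ^ (A + 1))
      / (1 - (q / (1 - q)) ^ (A + 1))"
proof -
  interpret att q z A using assms by unfold_locales auto
  obtain w where w: "z = Suc w" using assms(3) by (cases z) auto
  have q1: "q \<noteq> 1" using assms by simp
  have "phi q z z = reg_inc_beta (4 * (1 - q) * q) (real z) (1/2)"
    unfolding w phi_GG[OF q1] reg_beta_GG[OF assms(1,2)] by simp
  then show ?thesis using P_A_phi unfolding Lam_def by simp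
qed

end
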